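(* Let $(L_\bullet,\psi)$ be an $n$-expansion Lie algebra. Then for each $i\in\mathbb{Z}_{\geq1}$, $L_i$ is spanned by the elements $[\sigma_1,[\sigma_2,[\dots,[\sigma_{i-1},\sigma_i]\dots]]]$ with $\sigma_1,\dots,\sigma_i\in L_1$. Furthermore, $\psi$ restricts to an isomorphism $L_1 \to V_{[n]}$.
   Context: $V_{[n]} = \mathbb{F}_2^n$ with basis $e_1,\dots,e_n$, viewed as a graded Lie algebra concentrated in degree $1$ with zero bracket. A graded Lie algebra over $\mathbb{F}_2$ is a Lie algebra $L_\bullet=\bigoplus_{m\geq1}L_m$ over $\mathbb{F}_2$ with $[L_h,L_k]\subseteq L_{h+k}$. An $n$-expansion Lie algebra is a pair $(L_\bullet,\psi)$ with: (1) $L_\bullet$ a graded Lie algebra over $\mathbb{F}_2$ and $\psi:L_\bullet\to V_{[n]}$ a surjective graded Lie algebra homomorphism; (2) $\ker\psi$ an abelian subalgebra; (3) $[L_\bullet,L_\bullet]=\ker\psi$; (4) for each $i\geq4$ and $\sigma_1,\dots,\sigma_i\in L_1$, the element $[\sigma_1,[\sigma_2,[\dots,[\sigma_{i-1},\sigma_i]\dots]]]$ does not depend on the order of $\sigma_1,\dots,\sigma_{i-2}$ and vanishes whenever $\sigma_s=\sigma_t$ for distinct $s,t\in\{1,\dots,i-2\}$; moreover if $\tau_1,\tau_2\in L_1$ and $\psi(\tau_1)\in\{e_1,\dots,e_n\}$ then $[\tau_1,[\tau_1,\tau_2]]=0$. *)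

theory Defs
  imports Main "HOL-Library.Z2" "HOL-Library.Multiset"
begin

text \<open>A vector space over F2 is an abelian group in which x + x = 0
  (scalar multiplication by 0 and 1 is then determined).\<close>

definition char2 :: "('a::ab_group_add) itself \<Rightarrow> bool" where
  "char2 _ \<longleftrightarrow> (\<forall>x::'a. x + x = 0)"

text \<open>F2-linear span: closure under 0 and addition (negation is the identity).\<close>
inductive_set f2span :: "('a::ab_group_add) set \<Rightarrow> 'a set" for S where
  zero: "0 \<in> f2span S"
| gen: "s \<in> S \<Longrightarrow> s \<in> f2span S"
| add: "a \<in> f2span S \<Longrightarrow> b \<in> f2span S \<Longrightarrow> a + b \<in> f2span S"

definition is_f2_subspace :: "('a::ab_group_add) set \<Rightarrow> bool" where
  "is_f2_subspace W \<longleftrightarrow> 0 \<in> W \<and> (\<forall>x\<in>W. \<forall>y\<in>W. x + y \<in> W)"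

definition lie_algebra_F2 :: "('a::ab_group_add \<Rightarrow> 'a \<Rightarrow> 'a) \<Rightarrow> bool" where
  "lie_algebra_F2 br \<longleftrightarrow> char2 TYPE('a) \<and>
     (\<forall>x y z. br (x + y) z = br x z + br y z) \<and>
     (\<forall>x y z. br x (y + z) = br x y + br x z) \<and>
     (\<forall>x. br x x = 0) \<and>
     (\<forall>x y z. br x (br y z) + br y (br z x) + br z (br x y) = 0)"

definition graded_lie_algebra_F2 ::
  "('a::ab_group_add \<Rightarrow> 'a \<Rightarrow> 'a) \<Rightarrow> (nat \<Rightarrow> 'a set) \<Rightarrow> bool" where
  "graded_lie_algebra_F2 br Lg \<longleftrightarrow> lie_algebra_F2 br \<and>
     (\<forall>m\<ge>1. is_f2_subspace (Lg m)) \<and>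
     (\<forall>x. \<exists>!c::nat \<Rightarrow> 'a. c 0 = 0 \<and> (\<forall>m\<ge>1. c m \<in> Lg m) \<and>
            finite {m. c m \<noteq> 0} \<and> x = (\<Sum>m\<in>{m. c m \<noteq> 0}. c m)) \<and>
     (\<forall>h\<ge>1. \<forall>k\<ge>1. \<forall>x\<in>Lg h. \<forall>y\<in>Lg k. br x y \<in> Lg (h + k))"

text \<open>V_[n] = F2^n, realised as functions nat => bit supported in {1..n},
  with pointwise addition; basis vectors e_i.\<close>
definition Vn :: "nat \<Rightarrow> (nat \<Rightarrow> bit) set" where
  "Vn n = {v. \<forall>i. v i \<noteq> 0 \<longrightarrow> i \<in> {1..n}}"

definition vadd :: "(nat \<Rightarrow> bit) \<Rightarrow> (nat \<Rightarrow> bit) \<Rightarrow> nat \<Rightarrow> bit" where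
  "vadd v w = (\<lambda>i. v i + w i)"

definition vzero :: "nat \<Rightarrow> bit" where
  "vzero = (\<lambda>i. 0)"

definition basis_e :: "nat \<Rightarrow> nat \<Rightarrow> bit" where
  "basis_e i = (\<lambda>j. if j = i then 1 else 0)"

definition Vdeg :: "nat \<Rightarrow> nat \<Rightarrow> (nat \<Rightarrow> bit) set" where
  "Vdeg n m = (if m = 1 then Vn n else {vzero})"

text \<open>Surjective graded Lie algebra homomorphism L -> V_[n] (bracket of V is zero).\<close>
definition surj_graded_hom_to_V ::
  "nat \<Rightarrow> ('a::ab_group_add \<Rightarrow> 'a \<Rightarrow> 'a) \<Rightarrow> (nat \<Rightarrow> 'a set) \<Rightarrow> ('a \<Rightarrow> nat \<Rightarrow> bit) \<Rightarrow> bool" where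
  "surj_graded_hom_to_V n br Lg \<psi> \<longleftrightarrow>
     (\<forall>x. \<psi> x \<in> Vn n) \<and>
     (\<forall>x y. \<psi> (x + y) = vadd (\<psi> x) (\<psi> y)) \<and>
     (\<forall>x y. \<psi> (br x y) = vzero) \<and>
     (\<forall>m\<ge>1. \<psi> ` Lg m \<subseteq> Vdeg n m) \<and>
     \<psi> ` UNIV = Vn n"

definition kerV :: "('a \<Rightarrow> nat \<Rightarrow> bit) \<Rightarrow> 'a set" where
  "kerV \<psi> = {x. \<psi> x = vzero}"

fun rbr :: "('a::zero \<Rightarrow> 'a \<Rightarrow> 'a) \<Rightarrow> 'a list \<Rightarrow> 'a" where
  "rbr br [] = 0"
| "rbr br [x] = x"
| "rbr br (x # xs) = br x (rbr br xs)"

definition n_expansion_lie_algebra ::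
  "nat \<Rightarrow> ('a::ab_group_add \<Rightarrow> 'a \<Rightarrow> 'a) \<Rightarrow> (nat \<Rightarrow> 'a set) \<Rightarrow> ('a \<Rightarrow> nat \<Rightarrow> bit) \<Rightarrow> bool" where
  "n_expansion_lie_algebra n br Lg \<psi> \<longleftrightarrow>
     graded_lie_algebra_F2 br Lg \<and>
     surj_graded_hom_to_V n br Lg \<psi> \<and>
     (\<forall>x\<in>kerV \<psi>. \<forall>y\<in>kerV \<psi>. br x y = 0) \<and>
     f2span {br x y | x y. True} = kerV \<psi> \<and>
     (\<forall>xs ys a b. length xs \<ge> 2 \<and> set xs \<subseteq> Lg 1 \<and> a \<in> Lg 1 \<and> b \<in> Lg 1 \<and>
          mset ys = mset xs \<longrightarrow> rbr br (ys @ [a, b]) = rbr br (xs @ [a, b])) \<and>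
     (\<forall>xs a b. length xs \<ge> 2 \<and> set xs \<subseteq> Lg 1 \<and> a \<in> Lg 1 \<and> b \<in> Lg 1 \<and>
          \<not> distinct xs \<longrightarrow> rbr br (xs @ [a, b]) = 0) \<and>
     (\<forall>t1\<in>Lg 1. \<forall>t2\<in>Lg 1. \<psi> t1 \<in> basis_e ` {1..n} \<longrightarrow> br t1 (br t1 t2) = 0)"

end

theory Submission
  imports Defs
begin

lemma bit_self_add: "(a::bit) + a = 0"
  by (cases a) auto

locale nexp =
  fixes n :: nat and br :: "'a::ab_group_add \<Rightarrow> 'a \<Rightarrow> 'a"
    and Lg :: "nat \<Rightarrow> 'a set" and \<psi> :: "'a \<Rightarrow> nat \<Rightarrow> bit"
  assumes A: "n_expansion_lie_algebra n br Lg \<psi>"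
begin

lemma gr: "graded_lie_algebra_F2 br Lg"
  using A unfolding n_expansion_lie_algebra_def by blast

lemma lie: "lie_algebra_F2 br"
  using gr unfolding graded_lie_algebra_F2_def by blast

lemma c2: "(x::'a) + x = 0"
  using lie unfolding lie_algebra_F2_def char2_def by blast

lemma neg_id: "- (x::'a) = x"
  using c2[of x] by (metis add_eq_0_iff)

lemma addl: "br (x + y) z = br x z + br y z"
  using lie unfolding lie_algebra_F2_def by blast
lemma addr: "br x (y + z) = br x y + br x z"
  using lie unfolding lie_algebra_F2_def by blast
lemma alt: "br x x = 0"
  using lie unfolding lie_algebra_F2_def by blast
lemma jac: "br x (br y z) + br y (br z x) + br z (br x y) = 0"
  using lie unfolding lie_algebra_F2_def by blast

lemma br0l[simp]: "br 0 y = 0"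
  using addl[of 0 0 y] by simp
lemma br0r[simp]: "br y 0 = 0"
  using addr[of y 0 0] by simp

lemma antisym: "br x y = br y x"
proof -
  have "br (x+y) (x+y) = br x x + br y x + (br x y + br y y)" by (simp only: addl addr)
  hence "0 = br y x + br x y" by (simp add: alt)
  hence "br x y + br y x = 0" by (simp add: add.commute)
  thus ?thesis by (metis add_eq_0_iff neg_id)
qed

lemma jac2: "br (br x u) b = br x (br u b) + br u (br b x)"
proof -
  have "br b (br x u) = - (br x (br u b) + br u (br b x))"
    using jac[of x u b] by (metis add.commute add_eq_0_iff)
  thus ?thesis using antisym[of "br x u" b] neg_id by simp
qed

lemma sub0: "m \<ge> 1 \<Longrightarrow> 0 \<in> Lg m"
  using gr unfolding graded_lie_algebra_F2_def is_f2_subspace_def by blast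
lemma subadd: "m \<ge> 1 \<Longrightarrow> x \<in> Lg m \<Longrightarrow> y \<in> Lg m \<Longrightarrow> x + y \<in> Lg m"
  using gr unfolding graded_lie_algebra_F2_def is_f2_subspace_def by blast
lemmas brdeg_all = gr[unfolded graded_lie_algebra_F2_def, THEN conjunct2, THEN conjunct2, THEN conjunct2]
lemma brdeg: "h \<ge> 1 \<Longrightarrow> k \<ge> 1 \<Longrightarrow> x \<in> Lg h \<Longrightarrow> y \<in> Lg k \<Longrightarrow> br x y \<in> Lg (h + k)"
  using brdeg_all by simp

definition P where "P x c \<longleftrightarrow> c 0 = 0 \<and> (\<forall>m\<ge>1. c m \<in> Lg m) \<and>
            finite {m. c m \<noteq> 0} \<and> x = (\<Sum>m\<in>{m. c m \<noteq> 0}. c m)"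

lemmas uniq_all = gr[unfolded graded_lie_algebra_F2_def, THEN conjunct2, THEN conjunct2, THEN conjunct1]
lemma uniq: "\<exists>!c. P x c"
  unfolding P_def using uniq_all by blast

definition cf where "cf x = (THE c. P x c)"

lemma cf_P: "P x (cf x)"
  unfolding cf_def using theI'[OF uniq] .

lemma cf_eq: "P x c \<Longrightarrow> cf x = c"
  unfolding cf_def using the1_equality[OF uniq] by blast

lemma P_intro:
  assumes "c 0 = 0" "\<forall>m\<ge>1. c m \<in> Lg m" "finite S" "\<forall>m. c m \<noteq> 0 \<longrightarrow> m \<in> S"
    "x = sum c S"
  shows "P x c"
proof -
  have ss: "{m. c m \<noteq> 0} \<subseteq> S" using assms(4) by blast
  have fin: "finite {m. c m \<noteq> 0}" using ss assms(3) finite_subset by blast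
  have "sum c S = sum c {m. c m \<noteq> 0}"
    by (rule sum.mono_neutral_right[OF assms(3) ss]) auto
  thus ?thesis unfolding P_def using assms fin by simp
qed

lemma cf_0[simp]: "cf x 0 = 0" using cf_P unfolding P_def by blast
lemma cf_in: "m \<ge> 1 \<Longrightarrow> cf x m \<in> Lg m" using cf_P unfolding P_def by blast
lemma cf_fin: "finite {m. cf x m \<noteq> 0}" using cf_P unfolding P_def by blast

lemma cf_sum: assumes "finite S" "{m. cf x m \<noteq> 0} \<subseteq> S" shows "x = sum (cf x) S"
proof -
  have "x = (\<Sum>m\<in>{m. cf x m \<noteq> 0}. cf x m)" using cf_P unfolding P_def by blast
  also have "\<dots> = sum (cf x) S"
    by (rule sum.mono_neutral_left[OF assms(1) assms(2)]) auto
  finally show ?thesis .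
qed

lemma cf_add: "cf (x + y) m = cf x m + cf y m"
proof -
  let ?S = "{m. cf x m \<noteq> 0} \<union> {m. cf y m \<noteq> 0}"
  have "P (x + y) (\<lambda>m. cf x m + cf y m)"
  proof (rule P_intro[where S = ?S])
    show "\<forall>m\<ge>1. cf x m + cf y m \<in> Lg m" using cf_in subadd by blast
    show "finite ?S" using cf_fin by blast
    show "\<forall>m. cf x m + cf y m \<noteq> 0 \<longrightarrow> m \<in> ?S" by auto
    have "x = sum (cf x) ?S" by (rule cf_sum) (use cf_fin in auto)
    moreover have "y = sum (cf y) ?S" by (rule cf_sum) (use cf_fin in auto)
    ultimately show "x + y = (\<Sum>m\<in>?S. cf x m + cf y m)" by (simp add: sum.distrib)
  qed simp
  thus ?thesis using cf_eq by metis
qed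

lemma cf_zero[simp]: "cf 0 m = 0"
proof -
  have "P 0 (\<lambda>m. 0)" by (rule P_intro[where S="{}"]) (auto intro: sub0)
  thus ?thesis using cf_eq by metis
qed

lemma cf_hom: assumes "m \<ge> 1" "x \<in> Lg m" shows "cf x = (\<lambda>k. if k = m then x else 0)"
proof -
  have "P x (\<lambda>k. if k = m then x else 0)"
    by (rule P_intro[where S="{m}"]) (use assms in \<open>auto intro: sub0\<close>)
  thus ?thesis using cf_eq by metis
qed

lemma cf_sumf: "finite T \<Longrightarrow> cf (sum f T) k = (\<Sum>t\<in>T. cf (f t) k)"
  by (induction T rule: finite_induct) (auto simp: cf_add)

lemma br_suml: "finite T \<Longrightarrow> br (sum f T) y = (\<Sum>t\<in>T. br (f t) y)"
  by (induction T rule: finite_induct) (auto simp: addl)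
lemma br_sumr: "finite T \<Longrightarrow> br y (sum f T) = (\<Sum>t\<in>T. br y (f t))"
  by (induction T rule: finite_induct) (auto simp: addr)

lemma cf_br: "cf (br a b) m = (let S = {m. cf a m \<noteq> 0} \<union> {m. cf b m \<noteq> 0} in
   (\<Sum>h\<in>S. \<Sum>k\<in>S. cf (br (cf a h) (cf b k)) m))"
proof -
  define S where "S = {m. cf a m \<noteq> 0} \<union> {m. cf b m \<noteq> 0}"
  have fS: "finite S" unfolding S_def using cf_fin by blast
  have "a = sum (cf a) S" by (rule cf_sum) (use fS S_def in auto)
  moreover have "b = sum (cf b) S" by (rule cf_sum) (use fS S_def in auto)
  ultimately have "br a b = (\<Sum>h\<in>S. \<Sum>k\<in>S. br (cf a h) (cf b k))"
    using fS by (metis (no_types, lifting) br_suml br_sumr sum.cong)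
  hence "cf (br a b) m = (\<Sum>h\<in>S. \<Sum>k\<in>S. cf (br (cf a h) (cf b k)) m)"
    using fS by (simp add: cf_sumf)
  thus ?thesis unfolding S_def Let_def .
qed

lemma cf_term: "cf (br (cf a h) (cf b k)) m =
   (if h \<ge> 1 \<and> k \<ge> 1 \<and> h + k = m then br (cf a h) (cf b k) else 0)"
proof (cases "h = 0 \<or> k = 0")
  case True thus ?thesis by auto
next
  case False
  hence "br (cf a h) (cf b k) \<in> Lg (h + k)" using brdeg cf_in by simp
  thus ?thesis using cf_hom[of "h+k"] False by auto
qed

lemma sum_closed:
  assumes "0 \<in> Q" "\<forall>x\<in>Q. \<forall>y\<in>Q. x + y \<in> Q"
  shows "finite T \<Longrightarrow> (\<forall>t\<in>T. f t \<in> Q) \<Longrightarrow> sum f T \<in> Q"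
  by (induction T rule: finite_induct) (use assms in auto)

lemma key:
  assumes "0 \<in> Q" "\<forall>x\<in>Q. \<forall>y\<in>Q. x + y \<in> Q"
    and H: "\<forall>x y h k. h \<ge> 1 \<longrightarrow> k \<ge> 1 \<longrightarrow> h + k = m \<longrightarrow> x \<in> Lg h \<longrightarrow> y \<in> Lg k \<longrightarrow> br x y \<in> Q"
  shows "z \<in> f2span {br x y | x y. True} \<Longrightarrow> cf z m \<in> Q"
proof (induction z rule: f2span.induct)
  case zero thus ?case using assms by simp
next
  case (add a b) thus ?case using assms by (simp add: cf_add)
next
  case (gen s)
  then obtain a b where s: "s = br a b" by blast
  define S where "S = {m. cf a m \<noteq> 0} \<union> {m. cf b m \<noteq> 0}"
  have fS: "finite S" unfolding S_def using cf_fin by blast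
  have "(\<Sum>h\<in>S. \<Sum>k\<in>S. cf (br (cf a h) (cf b k)) m) \<in> Q"
  proof (rule sum_closed[OF assms(1,2) fS], intro ballI)
    fix h assume "h \<in> S"
    show "(\<Sum>k\<in>S. cf (br (cf a h) (cf b k)) m) \<in> Q"
    proof (rule sum_closed[OF assms(1,2) fS], intro ballI)
      fix k assume "k \<in> S"
      show "cf (br (cf a h) (cf b k)) m \<in> Q"
        unfolding cf_term using H cf_in assms(1) by auto
    qed
  qed
  thus ?case using s cf_br[of a b m] unfolding S_def Let_def by simp
qed

definition R where "R m = f2span {rbr br xs | xs. length xs = m \<and> set xs \<subseteq> Lg 1}"

lemma rbr_deg: "xs \<noteq> [] \<Longrightarrow> set xs \<subseteq> Lg 1 \<Longrightarrow> rbr br xs \<in> Lg (length xs)"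
proof (induction xs)
  case Nil thus ?case by simp
next
  case (Cons x xs)
  show ?case
  proof (cases xs)
    case Nil thus ?thesis using Cons by simp
  next
    case (Cons y ys)
    hence "rbr br (x # xs) = br x (rbr br xs)" by simp
    moreover have "rbr br xs \<in> Lg (length xs)" using Cons.IH Cons.prems Cons by simp
    ultimately show ?thesis using brdeg[of 1 "length xs" x] Cons.prems Cons by simp
  qed
qed

lemma R_sub: assumes "m \<ge> 1" shows "R m \<subseteq> Lg m"
proof
  fix x assume "x \<in> R m"
  thus "x \<in> Lg m" unfolding R_def
  proof (induction x rule: f2span.induct)
    case zero thus ?case using sub0 assms by simp
  next
    case (gen s)
    then obtain xs where xs: "s = rbr br xs" "length xs = m" "set xs \<subseteq> Lg 1" by blast
    hence "xs \<noteq> []" using assms by auto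
    thus ?case using rbr_deg[of xs] xs by simp
  next
    case (add a b) thus ?case using subadd assms by simp
  qed
qed

lemma brL1: assumes "x \<in> Lg 1" "k \<ge> 1" shows "r \<in> R k \<Longrightarrow> br x r \<in> R (Suc k)"
  unfolding R_def
proof (induction r rule: f2span.induct)
  case zero thus ?case by (simp add: f2span.zero)
next
  case (add a b) thus ?case by (simp add: addr f2span.add)
next
  case (gen s)
  then obtain ys where ys: "s = rbr br ys" "length ys = k" "set ys \<subseteq> Lg 1" by blast
  then obtain y zs where "ys = y # zs" using assms(2) by (cases ys) auto
  hence e: "br x s = rbr br (x # ys)" using ys by simp
  have "length (x # ys) = Suc k \<and> set (x # ys) \<subseteq> Lg 1" using ys assms by simp
  hence "rbr br (x # ys) \<in> {rbr br xs | xs. length xs = Suc k \<and> set xs \<subseteq> Lg 1}" by blast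
  thus ?case unfolding e by (rule f2span.gen)
qed

lemma lemA: "xs \<noteq> [] \<Longrightarrow> set xs \<subseteq> Lg 1 \<Longrightarrow> k \<ge> 1 \<Longrightarrow> b \<in> R k \<Longrightarrow>
   br (rbr br xs) b \<in> R (length xs + k)"
proof (induction xs arbitrary: k b)
  case Nil thus ?case by simp
next
  case (Cons x xs)
  show ?case
  proof (cases xs)
    case Nil thus ?thesis using Cons brL1 by simp
  next
    case (Cons y ys)
    hence e: "rbr br (x # xs) = br x (rbr br xs)" by simp
    have x1: "x \<in> Lg 1" using Cons.prems by simp
    have "br (rbr br xs) b \<in> R (length xs + k)" using Cons.IH Cons.prems Cons by simp
    hence t1: "br x (br (rbr br xs) b) \<in> R (Suc (length xs + k))"
      using brL1 x1 Cons.prems by simp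
    have "br b x = br x b" by (rule antisym)
    hence "br b x \<in> R (Suc k)" using brL1 x1 Cons.prems by simp
    moreover have "xs \<noteq> []" "set xs \<subseteq> Lg 1" "Suc k \<ge> 1" using Cons.prems Cons by auto
    ultimately have t2: "br (rbr br xs) (br b x) \<in> R (length xs + Suc k)"
      using Cons.IH[of "Suc k" "br b x"] by blast
    have "br (rbr br (x # xs)) b = br x (br (rbr br xs) b) + br (rbr br xs) (br b x)"
      unfolding e by (rule jac2)
    thus ?thesis using t1 t2 unfolding R_def
      by (simp add: f2span.add)
  qed
qed

lemma lemA': "a \<in> R h \<Longrightarrow> h \<ge> 1 \<Longrightarrow> k \<ge> 1 \<Longrightarrow> b \<in> R k \<Longrightarrow> br a b \<in> R (h + k)"
  unfolding R_def
proof (induction a rule: f2span.induct)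
  case zero thus ?case by (simp add: f2span.zero)
next
  case (add a1 a2) thus ?case by (simp add: addl f2span.add)
next
  case (gen s)
  then obtain xs where xs: "s = rbr br xs" "length xs = h" "set xs \<subseteq> Lg 1" by blast
  have "xs \<noteq> []" using xs gen.prems by auto
  hence "br (rbr br xs) b \<in> R (length xs + k)" using lemA[of xs k b] xs gen.prems
    unfolding R_def by blast
  thus ?case using xs unfolding R_def by simp
qed

lemma psi_add: "\<psi> (x + y) i = \<psi> x i + \<psi> y i"
  using A unfolding n_expansion_lie_algebra_def surj_graded_hom_to_V_def vadd_def
  by simp

lemma psi0[simp]: "\<psi> 0 i = 0"
proof -
  have "\<psi> 0 i = \<psi> 0 i + \<psi> 0 i" using psi_add[of 0 0] by simp
  thus ?thesis by (metis add_cancel_right_right)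
qed

lemma psi_sum: "finite S \<Longrightarrow> \<psi> (sum f S) i = (\<Sum>m\<in>S. \<psi> (f m) i)"
  by (induction S rule: finite_induct) (auto simp: psi_add)

lemma psi_deg: "m \<ge> 1 \<Longrightarrow> x \<in> Lg m \<Longrightarrow> \<psi> x \<in> Vdeg n m"
  using A unfolding n_expansion_lie_algebra_def surj_graded_hom_to_V_def by blast

lemma psi_surj: "\<psi> ` UNIV = Vn n"
  using A unfolding n_expansion_lie_algebra_def surj_graded_hom_to_V_def by blast

lemma psi_in: "\<psi> x \<in> Vn n"
  using A unfolding n_expansion_lie_algebra_def surj_graded_hom_to_V_def by blast

lemma kerspan: "f2span {br x y | x y. True} = kerV \<psi>"
  using A unfolding n_expansion_lie_algebra_def by blast


lemma Lg_R: "m \<ge> 1 \<Longrightarrow> Lg m \<subseteq> R m"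
proof (induction m rule: less_induct)
  case (less m)
  show ?case
  proof (cases "m = 1")
    case True
    show ?thesis
    proof
      fix x assume "x \<in> Lg m"
      hence "length [x] = m \<and> set [x] \<subseteq> Lg 1" using True by simp
      hence "rbr br [x] \<in> {rbr br xs | xs. length xs = m \<and> set xs \<subseteq> Lg 1}" by blast
      hence "rbr br [x] \<in> R m" unfolding R_def by (rule f2span.gen)
      thus "x \<in> R m" by simp
    qed
  next
    case False
    hence m2: "m \<ge> 2" using less.prems by simp
    show ?thesis
    proof
      fix x assume x: "x \<in> Lg m"
      have "\<psi> x = vzero" using psi_deg[OF less.prems x] m2 unfolding Vdeg_def by simp
      hence xk: "x \<in> f2span {br x y | x y. True}" using kerspan unfolding kerV_def by simp
      have "cf x m \<in> R m"
      proof (rule key[OF _ _ _ xk])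
        show "0 \<in> R m" unfolding R_def by (rule f2span.zero)
        show "\<forall>x\<in>R m. \<forall>y\<in>R m. x + y \<in> R m" unfolding R_def by (blast intro: f2span.add)
        show "\<forall>x y h k. 1 \<le> h \<longrightarrow> 1 \<le> k \<longrightarrow> h + k = m \<longrightarrow> x \<in> Lg h \<longrightarrow> y \<in> Lg k \<longrightarrow> br x y \<in> R m"
        proof (intro allI impI)
          fix x y h k assume h: "1 \<le> h" "1 \<le> k" "h + k = m" "x \<in> Lg h" "y \<in> Lg k"
          have "x \<in> R h" using less.IH[of h] h by auto
          moreover have "y \<in> R k" using less.IH[of k] h by auto
          ultimately show "br x y \<in> R m" using lemA' h by blast
        qed
      qed
      thus "x \<in> R m" using cf_hom[OF less.prems x] by simp
    qed
  qed
qed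

lemma part1: "m \<ge> 1 \<Longrightarrow> Lg m = R m"
  using Lg_R R_sub by blast

lemma inj_part: assumes "x \<in> Lg 1" "\<psi> x = vzero" shows "x = 0"
proof -
  have xk: "x \<in> f2span {br x y | x y. True}" using kerspan assms unfolding kerV_def by simp
  have "cf x 1 \<in> {0}"
    by (rule key[OF _ _ _ xk]) auto
  thus ?thesis using cf_hom[OF _ assms(1)] by simp
qed

lemma part2: "bij_betw \<psi> (Lg 1) (Vn n)"
proof (rule bij_betw_imageI)
  show "inj_on \<psi> (Lg 1)"
  proof (rule inj_onI)
    fix x y assume xy: "x \<in> Lg 1" "y \<in> Lg 1" "\<psi> x = \<psi> y"
    have "\<psi> (x + y) = vzero" using xy psi_add by (simp add: fun_eq_iff bit_self_add vzero_def)
    hence "x + y = 0" using inj_part subadd xy by simp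
    thus "x = y" using neg_id by (metis add_eq_0_iff)
  qed
  show "\<psi> ` Lg 1 = Vn n"
  proof
    show "\<psi> ` Lg 1 \<subseteq> Vn n" using psi_in by blast
    show "Vn n \<subseteq> \<psi> ` Lg 1"
    proof
      fix v assume "v \<in> Vn n"
      then obtain x where v: "v = \<psi> x" using psi_surj by blast
      define S where "S = insert 1 {m. cf x m \<noteq> 0}"
      have fS: "finite S" unfolding S_def using cf_fin by blast
      have xs: "x = sum (cf x) S" by (rule cf_sum) (use fS S_def in auto)
      have "\<psi> x = \<psi> (cf x 1)"
      proof
        fix j
        have "\<psi> x j = (\<Sum>m\<in>S. \<psi> (cf x m) j)"
          using fS xs psi_sum by metis
        also have "\<dots> = \<psi> (cf x 1) j + (\<Sum>m\<in>S - {1}. \<psi> (cf x m) j)"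
          by (rule sum.remove[OF fS]) (simp add: S_def)
        also have "(\<Sum>m\<in>S - {1}. \<psi> (cf x m) j) = 0"
        proof (rule sum.neutral, rule ballI)
          fix i assume i: "i \<in> S - {1}"
          show "\<psi> (cf x i) j = 0"
          proof (cases "i = 0")
            case False
            hence "\<psi> (cf x i) \<in> Vdeg n i" using psi_deg cf_in by simp
            thus ?thesis using i False unfolding Vdeg_def vzero_def by auto
          qed simp
        qed
        finally show "\<psi> x j = \<psi> (cf x 1) j" by simp
      qed
      thus "v \<in> \<psi> ` Lg 1" using v cf_in[of 1 x] by auto
    qed
  qed
qed

end

theorem proposition3p4:
  fixes n :: nat and br :: "'a::ab_group_add \<Rightarrow> 'a \<Rightarrow> 'a"
    and Lg :: "nat \<Rightarrow> 'a set" and \<psi> :: "'a \<Rightarrow> nat \<Rightarrow> bit"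
  assumes "n_expansion_lie_algebra n br Lg \<psi>"
  shows "(\<forall>i\<ge>1. Lg i = f2span {rbr br xs | xs. length xs = i \<and> set xs \<subseteq> Lg 1})
         \<and> bij_betw \<psi> (Lg 1) (Vn n)"
proof -
  interpret nexp n br Lg \<psi> by (unfold_locales) (rule assms)
  show ?thesis using part1 part2 unfolding R_def by blast
qed

end
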